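(* Let $n,k$ be natural numbers with $2k\le n$, and let $N_{n,k}$ be the reflexive graph on vertex set $\{1,\dots,n\}$ with edge set $\{\{i,j\}:1\le i\le j\le n\}\setminus\{\{1,2\},\{3,4\},\dots,\{2k-1,2k\}\}$. Every proper homomorphic image of $N_{n,k}$ (i.e. every reflexive graph $H$ for which there is a non-injective surjective homomorphism $N_{n,k}\to H$) is isomorphic to $N_{m,l}$ for some $m,l$ with $2l<m$.
   Context: Graphs here are reflexive: a set with a symmetric edge relation having a loop at every vertex. A homomorphism maps edges to edges (and may collapse edges or non-edges to single vertices). The graphs $N_{n,k}$ are called subcomplete; $N_{2k,k}$ are proper subcomplete and $N_{n,k}$ with $2k<n$ are partial subcomplete. *)

theory Defs
  imports Main
begin

definition refl_graph :: "'a set \<Rightarrow> ('a \<Rightarrow> 'a \<Rightarrow> bool) \<Rightarrow> bool" where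
  "refl_graph V E \<longleftrightarrow>
     (\<forall>x y. E x y \<longrightarrow> x \<in> V \<and> y \<in> V) \<and>
     (\<forall>x y. E x y \<longrightarrow> E y x) \<and>
     (\<forall>x\<in>V. E x x)"

definition graph_hom ::
  "'a set \<Rightarrow> ('a \<Rightarrow> 'a \<Rightarrow> bool) \<Rightarrow> 'b set \<Rightarrow> ('b \<Rightarrow> 'b \<Rightarrow> bool) \<Rightarrow> ('a \<Rightarrow> 'b) \<Rightarrow> bool" where
  "graph_hom V E V' E' f \<longleftrightarrow>
     (\<forall>x\<in>V. f x \<in> V') \<and> (\<forall>x\<in>V. \<forall>y\<in>V. E x y \<longrightarrow> E' (f x) (f y))"

definition graph_iso ::
  "'a set \<Rightarrow> ('a \<Rightarrow> 'a \<Rightarrow> bool) \<Rightarrow> 'b set \<Rightarrow> ('b \<Rightarrow> 'b \<Rightarrow> bool) \<Rightarrow> ('a \<Rightarrow> 'b) \<Rightarrow> bool" where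
  "graph_iso V E V' E' f \<longleftrightarrow>
     bij_betw f V V' \<and> (\<forall>x\<in>V. \<forall>y\<in>V. E x y \<longleftrightarrow> E' (f x) (f y))"

definition graph_isomorphic ::
  "'a set \<Rightarrow> ('a \<Rightarrow> 'a \<Rightarrow> bool) \<Rightarrow> 'b set \<Rightarrow> ('b \<Rightarrow> 'b \<Rightarrow> bool) \<Rightarrow> bool" where
  "graph_isomorphic V E V' E' \<longleftrightarrow> (\<exists>f. graph_iso V E V' E' f)"

definition N_verts :: "nat \<Rightarrow> nat set" where
  "N_verts n = {1..n}"

definition N_edge :: "nat \<Rightarrow> nat \<Rightarrow> nat \<Rightarrow> nat \<Rightarrow> bool" where
  "N_edge n k i j \<longleftrightarrow>
     i \<in> {1..n} \<and> j \<in> {1..n} \<and> \<not> (\<exists>t\<in>{1..k}. {i, j} = {2*t - 1, 2*t})"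

end

theory Submission
  imports Defs
begin

lemma pair_iff:
  fixes a b :: nat
  assumes "a \<ge> 1" "b \<ge> 1" "0 \<notin> A"
  shows "(\<exists>t\<in>A. {a, b} = {2*t - 1, 2*t}) \<longleftrightarrow> a \<noteq> b \<and> (a+1) div 2 = (b+1) div 2 \<and> (a+1) div 2 \<in> A"
proof
  assume "\<exists>t\<in>A. {a, b} = {2*t - 1, 2*t}"
  then obtain t where t: "t \<in> A" "{a, b} = {2*t - 1, 2*t}" by blast
  have "t \<ge> 1" using t assms(3) by (cases t) auto
  from t(2) have "(a = 2*t-1 \<and> b = 2*t) \<or> (a = 2*t \<and> b = 2*t-1)"
    by (metis doubleton_eq_iff)
  then show "a \<noteq> b \<and> (a+1) div 2 = (b+1) div 2 \<and> (a+1) div 2 \<in> A"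
    using \<open>t\<ge>1\<close> t(1) by auto
next
  assume h: "a \<noteq> b \<and> (a+1) div 2 = (b+1) div 2 \<and> (a+1) div 2 \<in> A"
  define t where "t = (a+1) div 2"
  have "(a = 2*t-1 \<and> b = 2*t) \<or> (a = 2*t \<and> b = 2*t-1)"
    using h[THEN conjunct1] h[THEN conjunct2, THEN conjunct1] assms(1,2) unfolding t_def
    by (cases "even a"; cases "even b") (auto elim!: evenE oddE)
  then have "{a,b} = {2*t-1, 2*t}" by auto
  then show "\<exists>t\<in>A. {a, b} = {2*t - 1, 2*t}" using h t_def by blast
qed

lemma h3: "(a+1) div 2 = (s+1) div 2 \<Longrightarrow> (b+1) div 2 = (s+1) div 2 \<Longrightarrow> a \<noteq> s \<Longrightarrow> b \<noteq> s \<Longrightarrow> a = (b::nat)"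
  by (cases "odd a"; cases "odd b"; cases "odd s") (auto elim!: oddE evenE)

lemma hC: "u \<ge> 1 \<Longrightarrow> (2*u - (if odd (i::nat) then 1 else 0) + 1) div 2 = (u::nat)"
  by (cases "odd i") auto
lemma hD: "(a::nat) \<ge> 1 \<Longrightarrow> 2*((a+1) div 2) - (if odd a then 1 else 0) = a"
  by (cases "odd a") (auto elim!: oddE evenE)
lemma hE: "(i::nat) \<ge> 1 \<Longrightarrow> i \<le> 2*l \<Longrightarrow> (i+1) div 2 \<in> {1..l}"
  by auto
lemma hF1: "odd (a::nat) \<Longrightarrow> (a+1+1) div 2 = (a+1) div 2"
  by (auto elim!: oddE)
lemma hF2: "even (a::nat) \<Longrightarrow> a \<ge> 1 \<Longrightarrow> (a-1+1) div 2 = (a+1) div 2"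
  by (auto elim!: evenE)
lemma hG: "(i::nat) \<ge> 1 \<Longrightarrow> j \<ge> 1 \<Longrightarrow> \<not> (i \<le> 2*l \<and> j \<le> 2*l) \<Longrightarrow> \<not> ((i+1) div 2 = (j+1) div 2 \<and> (i+1) div 2 \<le> l)"
  by auto
lemma hH: "((i::nat)+1) div 2 = (j+1) div 2 \<Longrightarrow> (odd i \<longleftrightarrow> odd j) \<Longrightarrow> i = j"
  by (cases "odd i") (auto elim!: oddE evenE)
lemma hpar: "(u::nat) \<ge> 1 \<Longrightarrow> odd (2*u - (if odd (i::nat) then 1 else 0)) \<longleftrightarrow> odd i"
  by auto

lemma iso_flip:
  assumes "graph_iso A EA B EB g"
  shows "graph_isomorphic B EB A EA"
proof -
  let ?h = "the_inv_into A g"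
  have b: "bij_betw g A B" and e: "\<forall>x\<in>A. \<forall>y\<in>A. EA x y \<longleftrightarrow> EB (g x) (g y)"
    using assms unfolding graph_iso_def by auto
  have hb: "bij_betw ?h B A" using b by (rule bij_betw_the_inv_into)
  have "\<forall>x\<in>B. \<forall>y\<in>B. EB x y \<longleftrightarrow> EA (?h x) (?h y)"
  proof (intro ballI)
    fix x y assume xy: "x \<in> B" "y \<in> B"
    have "?h x \<in> A" "?h y \<in> A" using hb xy bij_betwE by blast+
    moreover have "g (?h x) = x" "g (?h y) = y"
      using b xy by (auto intro!: f_the_inv_into_f simp: bij_betw_def)
    ultimately show "EB x y \<longleftrightarrow> EA (?h x) (?h y)" using e by metis
  qed
  then show ?thesis using hb unfolding graph_isomorphic_def graph_iso_def by blast
qed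

theorem proposition3p2:
  fixes n k :: nat and V :: "'b set" and E :: "'b \<Rightarrow> 'b \<Rightarrow> bool" and f :: "nat \<Rightarrow> 'b"
  assumes "2 * k \<le> n"
    and "refl_graph V E"
    and "graph_hom (N_verts n) (N_edge n k) V E f"
    and "f ` N_verts n = V"
    and "\<not> inj_on f (N_verts n)"
  shows "\<exists>m l. 2 * l < m \<and> graph_isomorphic V E (N_verts m) (N_edge m l)"
proof -
  note kn = assms(1)
  have Esym: "\<And>x y. E x y \<Longrightarrow> E y x" and Erefl: "\<And>x. x \<in> V \<Longrightarrow> E x x"
    using assms(2) unfolding refl_graph_def by auto
  have fV: "\<And>a. a \<in> {1..n} \<Longrightarrow> f a \<in> V" using assms(4) unfolding N_verts_def by auto
  have hom: "\<And>a b. a \<in> {1..n} \<Longrightarrow> b \<in> {1..n} \<Longrightarrow> N_edge n k a b \<Longrightarrow> E (f a) (f b)"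
    using assms(3) unfolding graph_hom_def N_verts_def by auto
  define h :: "nat \<Rightarrow> nat" where "h x = (x+1) div 2" for x
  define T where "T = {t\<in>{1..k}. \<not> E (f (2*t-1)) (f (2*t))}"
  have T1k: "T \<subseteq> {1..k}" unfolding T_def by auto
  have finT: "finite T" using T1k finite_subset by blast
  have key: "E (f a) (f b) \<longleftrightarrow> \<not> (a \<noteq> b \<and> h a = h b \<and> h a \<in> T)"
    if ab: "a \<in> {1..n}" "b \<in> {1..n}" for a b
  proof (cases "a \<noteq> b \<and> h a = h b \<and> h a \<in> {1..k}")
    case True
    have a1: "a \<ge> 1" "b \<ge> 1" using ab by auto
    have "\<exists>t\<in>{1..k}. {a, b} = {2*t - 1, 2*t}"
      using pair_iff[OF a1, of "{1..k}"] True unfolding h_def by simp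
    then obtain t where t: "t \<in> {1..k}" "{a, b} = {2*t - 1, 2*t}" by blast
    from t(2) have o: "(a = 2*t-1 \<and> b = 2*t) \<or> (a = 2*t \<and> b = 2*t-1)"
      by (simp add: doubleton_eq_iff)
    have ht: "h a = t" using o t(1) unfolding h_def by auto
    show ?thesis
    proof (cases "t \<in> T")
      case True
      then have ne: "\<not> E (f (2*t-1)) (f (2*t))" unfolding T_def by simp
      have "\<not> E (f a) (f b)"
      proof
        assume "E (f a) (f b)"
        then show False using o ne Esym by blast
      qed
      then show ?thesis using ht True \<open>a\<noteq>b \<and> h a = h b \<and> h a \<in> {1..k}\<close> by simp
    next
      case False
      then have "E (f (2*t-1)) (f (2*t))" using t(1) unfolding T_def by simp
      then have "E (f a) (f b)" using o Esym by blast
      then show ?thesis using ht False by simp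
    qed
  next
    case False
    have a1: "a \<ge> 1" "b \<ge> 1" using ab by auto
    have "\<not> (\<exists>t\<in>{1..k}. {a, b} = {2*t - 1, 2*t})"
      using pair_iff[OF a1, of "{1..k}"] False unfolding h_def by simp
    then have "N_edge n k a b" using ab unfolding N_edge_def by blast
    then have "E (f a) (f b)" using hom[OF ab] by blast
    moreover have "\<not> (a \<noteq> b \<and> h a = h b \<and> h a \<in> T)" using False T1k by blast
    ultimately show ?thesis by simp
  qed
  define S where "S = {a\<in>{1..n}. h a \<in> T}"
  have Ssub: "S \<subseteq> {1..n}" unfolding S_def by auto
  have partner: "\<exists>a'\<in>{1..n}. a' \<noteq> a \<and> h a' = h a" if "a \<in> S" for a
  proof -
    have t: "h a \<in> {1..k}" "a \<in> {1..n}" using that T1k unfolding S_def by auto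
    show ?thesis
    proof (cases "odd a")
      case True
      have "2 * h a - 1 = a" using hD[of a] t True unfolding h_def by simp
      moreover have "h a \<le> k" "h a \<ge> 1" using t(1) by simp_all
      ultimately have "a + 1 \<le> n" using kn by arith
      moreover have "h (a+1) = h a" using hF1[OF True] unfolding h_def by simp
      ultimately show ?thesis using t by (intro bexI[of _ "a+1"]) auto
    next
      case False
      have "2 * h a = a" using hD[of a] t False unfolding h_def by simp
      moreover have "h a \<ge> 1" "a \<le> n" using t(1,2) by simp_all
      ultimately have "a - 1 \<ge> 1" "a - 1 \<le> n" by linarith+
      moreover have "h (a-1) = h a" using hF2[of a] False t unfolding h_def by simp
      ultimately show ?thesis using t by (intro bexI[of _ "a-1"]) auto
    qed
  qed
  have Sunique: "a = s" if sS: "s \<in> S" "a \<in> {1..n}" "f a = f s" for a s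
  proof (rule ccontr)
    assume as: "a \<noteq> s"
    obtain s' where s': "s' \<in> {1..n}" "s' \<noteq> s" "h s' = h s" using partner[OF sS(1)] by blast
    have hs: "h s \<in> T" "s \<in> {1..n}" using sS(1) unfolding S_def by auto
    have ne: "\<not> E (f s) (f s')" using key[OF hs(2) s'(1)] s' hs by auto
    show False
    proof (cases "a = s'")
      case True
      then have "f s' = f s" using sS(3) by simp
      moreover have "f s \<in> V" using fV hs(2) by blast
      ultimately show ?thesis using ne Erefl by simp
    next
      case False
      have "h a \<noteq> h s"
      proof
        assume "h a = h s"
        then show False using h3[of a s s'] as False s'(2,3) unfolding h_def by auto
      qed
      then have "E (f a) (f s')" using key[OF sS(2) s'(1)] s' by auto
      then show ?thesis using ne sS(3) by simp
    qed
  qed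
  define l where "l = card T"
  obtain \<tau> where tau: "bij_betw \<tau> {1..l} T"
    using ex_bij_betw_nat_finite_1[OF finT] unfolding l_def by blast
  define R where "R = V - f ` S"
  have finV: "finite V" using assms(4) unfolding N_verts_def by auto
  have finR: "finite R" using finV unfolding R_def by auto
  obtain \<rho> where rho: "bij_betw \<rho> {1..card R} R"
    using ex_bij_betw_nat_finite_1[OF finR] by blast
  have Rne: "card R \<ge> 1"
  proof -
    obtain a b where ab: "a \<in> {1..n}" "b \<in> {1..n}" "a \<noteq> b" "f a = f b"
      using assms(5) unfolding inj_on_def N_verts_def by blast
    have "f a \<notin> f ` S"
    proof
      assume "f a \<in> f ` S"
      then obtain s where "s \<in> S" "f a = f s" by blast
      then show False using Sunique[of s a] Sunique[of s b] ab by auto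
    qed
    then have "f a \<in> R" unfolding R_def using fV ab by auto
    then have "R \<noteq> {}" by blast
    then show ?thesis using finR by (simp add: Suc_le_eq card_gt_0_iff)
  qed
  define m where "m = 2*l + card R"
  define \<sigma> where "\<sigma> i = 2 * \<tau> (h i) - (if odd i then 1 else 0)" for i
  define c where "c i = (if i \<le> 2*l then \<sigma> i else (SOME a. a \<in> {1..n} \<and> f a = \<rho> (i - 2*l)))" for i
  define g where "g i = f (c i)" for i
  have tau_in: "\<tau> s \<in> T" "\<tau> s \<ge> 1" "\<tau> s \<le> k" if "s \<in> {1..l}" for s
  proof -
    have "\<tau> s \<in> T" using bij_betwE[OF tau] that by blast
    then show "\<tau> s \<in> T" "\<tau> s \<ge> 1" "\<tau> s \<le> k" using T1k by auto
  qed
  have tauinj: "inj_on \<tau> {1..l}" using tau by (simp add: bij_betw_def)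
  have hrange: "h i \<in> {1..l}" if "i \<in> {1..2*l}" for i
    using that hE unfolding h_def by auto
  have sig: "\<sigma> i \<in> S" "h (\<sigma> i) = \<tau> (h i)" if "i \<in> {1..2*l}" for i
  proof -
    have t: "\<tau> (h i) \<in> T" "\<tau> (h i) \<ge> 1" "\<tau> (h i) \<le> k" using tau_in hrange that by auto
    show "h (\<sigma> i) = \<tau> (h i)" using hC[OF t(2)] unfolding \<sigma>_def h_def by simp
    moreover have "\<sigma> i \<in> {1..n}" using t kn unfolding \<sigma>_def by (cases "odd i") auto
    ultimately show "\<sigma> i \<in> S" using t unfolding S_def by auto
  qed
  have sig_par: "odd (\<sigma> i) \<longleftrightarrow> odd i" if "i \<in> {1..2*l}" for i
  proof -
    have "\<tau> (h i) \<ge> 1" using tau_in hrange that by auto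
    then show ?thesis unfolding \<sigma>_def by (rule hpar)
  qed
  have sig_inj: "i = j" if "i \<in> {1..2*l}" "j \<in> {1..2*l}" "\<sigma> i = \<sigma> j" for i j
  proof -
    have "\<tau> (h i) = \<tau> (h j)" using sig(2)[OF that(1)] sig(2)[OF that(2)] that(3) by simp
    then have "h i = h j" using tau hrange that unfolding bij_betw_def inj_on_def by blast
    moreover have "odd i \<longleftrightarrow> odd j" using sig_par[OF that(1)] sig_par[OF that(2)] that(3) by simp
    ultimately show ?thesis unfolding h_def by (rule hH)
  qed
  have sig_surj: "\<exists>i\<in>{1..2*l}. \<sigma> i = a" if "a \<in> S" for a
  proof -
    have a: "a \<in> {1..n}" "h a \<in> T" using that unfolding S_def by auto
    then obtain s where s: "s \<in> {1..l}" "\<tau> s = h a"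
      using tau unfolding bij_betw_def by force
    define i where "i = 2*s - (if odd a then 1 else 0)"
    have s1: "s \<ge> 1" using s(1) by simp
    have hi: "h i = s" using hC[OF s1, of a] unfolding i_def h_def by simp
    have "i \<in> {1..2*l}" using s(1) unfolding i_def by (cases "odd a") auto
    moreover have "\<sigma> i = a"
    proof -
      have "odd i \<longleftrightarrow> odd a" using hpar[OF s1, of a] unfolding i_def by simp
      then have "\<sigma> i = 2 * h a - (if odd a then 1 else 0)" unfolding \<sigma>_def hi s(2) by simp
      also have "\<dots> = a" using hD[of a] a(1) unfolding h_def by simp
      finally show ?thesis .
    qed
    ultimately show ?thesis by blast
  qed
  have cR: "c i \<in> {1..n}" "f (c i) = \<rho> (i - 2*l)" if "i \<in> {1..m}" "\<not> i \<le> 2*l" for i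
  proof -
    have "i - 2*l \<in> {1..card R}" using that unfolding m_def by auto
    then have "\<rho> (i - 2*l) \<in> R" using bij_betwE[OF rho] by blast
    then have "\<exists>a. a \<in> {1..n} \<and> f a = \<rho> (i - 2*l)" unfolding R_def using assms(4)
      unfolding N_verts_def by auto
    from someI_ex[OF this] have "c i \<in> {1..n} \<and> f (c i) = \<rho> (i - 2*l)"
      unfolding c_def using that(2) by simp
    then show "c i \<in> {1..n}" "f (c i) = \<rho> (i - 2*l)" by auto
  qed
  have cR2: "\<rho> (i - 2*l) \<in> R" if "i \<in> {1..m}" "\<not> i \<le> 2*l" for i
  proof -
    have "i - 2*l \<in> {1..card R}" using that unfolding m_def by auto
    then show ?thesis using bij_betwE[OF rho] by blast
  qed
  have cnotS: "h (c i) \<notin> T" if "i \<in> {1..m}" "\<not> i \<le> 2*l" for i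
  proof
    assume "h (c i) \<in> T"
    then have "c i \<in> S" using cR that unfolding S_def by auto
    then have "f (c i) \<in> f ` S" by auto
    then show False using cR cR2 that unfolding R_def by auto
  qed
  have c_in: "c i \<in> {1..n}" if "i \<in> {1..m}" for i
  proof (cases "i \<le> 2*l")
    case True
    then have "\<sigma> i \<in> S" using sig that by auto
    then show ?thesis using True Ssub unfolding c_def by auto
  next
    case False
    then show ?thesis using cR[OF that] by auto
  qed
  have gE: "E (g i) (g j) \<longleftrightarrow> N_edge m l i j" if ij: "i \<in> {1..m}" "j \<in> {1..m}" for i j
  proof -
    have i1: "i \<ge> 1" "j \<ge> 1" using ij by simp_all
    have pi: "(\<exists>t\<in>{1..l}. {i, j} = {2*t - 1, 2*t}) \<longleftrightarrow> (i \<noteq> j \<and> h i = h j \<and> h i \<in> {1..l})"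
      using pair_iff[OF i1, of "{1..l}"] unfolding h_def by simp
    have A: "N_edge m l i j \<longleftrightarrow> \<not> (i \<noteq> j \<and> h i = h j \<and> h i \<in> {1..l})"
      unfolding N_edge_def using ij pi by simp
    have B: "E (g i) (g j) \<longleftrightarrow> \<not> (c i \<noteq> c j \<and> h (c i) = h (c j) \<and> h (c i) \<in> T)"
      unfolding g_def by (rule key[OF c_in[OF ij(1)] c_in[OF ij(2)]])
    have C: "(c i \<noteq> c j \<and> h (c i) = h (c j) \<and> h (c i) \<in> T) \<longleftrightarrow>
                   (i \<noteq> j \<and> h i = h j \<and> h i \<in> {1..l})"
    proof (cases "i \<le> 2*l \<and> j \<le> 2*l")
      case True
      then have ii: "i \<in> {1..2*l}" "j \<in> {1..2*l}" using ij by auto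
      have cc: "c i = \<sigma> i" "c j = \<sigma> j" using True unfolding c_def by auto
      have hi: "h i \<in> {1..l}" using hrange ii by blast
      have e1: "\<tau> (h i) = \<tau> (h j) \<longleftrightarrow> h i = h j"
        using inj_on_eq_iff[OF tauinj hrange[OF ii(1)] hrange[OF ii(2)]] .
      have e2: "\<sigma> i = \<sigma> j \<longleftrightarrow> i = j" using sig_inj[OF ii] by auto
      have e3: "h (\<sigma> i) \<in> T" using sig(2)[OF ii(1)] tau_in(1)[OF hi] by simp
      have e4: "\<tau> (h i) \<in> T" using tau_in(1)[OF hi] .
      show ?thesis unfolding cc sig(2)[OF ii(1)] sig(2)[OF ii(2)]
        by (simp only: e1 e2) (use hi e4 in auto)
    next
      case False
      have i1: "i \<ge> 1" "j \<ge> 1" using ij by simp_all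
      have r0: "\<not> (h i = h j \<and> h i \<le> l)" using hG[OF i1, of l] False unfolding h_def by simp
      have r: "\<not> (h i = h j \<and> h i \<in> {1..l})" using r0 by simp
      have "\<not> (h (c i) = h (c j) \<and> h (c i) \<in> T)"
      proof (cases "i \<le> 2*l")
        case True
        then have "\<not> j \<le> 2*l" using False by auto
        then have "h (c j) \<notin> T" using cnotS ij by blast
        then show ?thesis by auto
      next
        case False
        then show ?thesis using cnotS ij by blast
      qed
      then show ?thesis using r by blast
    qed
    show ?thesis by (simp only: A B C)
  qed
  have ginj: "inj_on g {1..m}"
  proof (rule inj_onI)
    fix i j assume ij: "i \<in> {1..m}" "j \<in> {1..m}" "g i = g j"
    show "i = j"
    proof (cases "i \<le> 2*l"; cases "j \<le> 2*l")
      assume a: "i \<le> 2*l" "j \<le> 2*l"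
      then have "f (\<sigma> i) = f (\<sigma> j)" using ij unfolding g_def c_def by auto
      moreover have "\<sigma> i \<in> S" "\<sigma> j \<in> S" using sig a ij by auto
      ultimately have "\<sigma> i = \<sigma> j" using Sunique[of "\<sigma> j" "\<sigma> i"] Ssub by blast
      then show ?thesis using sig_inj a ij by auto
    next
      assume a: "i \<le> 2*l" "\<not> j \<le> 2*l"
      have "g i = f (\<sigma> i)" using a unfolding g_def c_def by simp
      moreover have "\<sigma> i \<in> S" using sig a ij(1) by auto
      ultimately have "g i \<in> f ` S" by simp
      moreover have "g j \<in> R" using cR(2)[OF ij(2) a(2)] cR2[OF ij(2) a(2)] unfolding g_def by simp
      ultimately show ?thesis using ij(3) unfolding R_def by auto
    next
      assume a: "\<not> i \<le> 2*l" "j \<le> 2*l"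
      have "g j = f (\<sigma> j)" using a unfolding g_def c_def by simp
      moreover have "\<sigma> j \<in> S" using sig a ij(2) by auto
      ultimately have "g j \<in> f ` S" by simp
      moreover have "g i \<in> R" using cR(2)[OF ij(1) a(1)] cR2[OF ij(1) a(1)] unfolding g_def by simp
      ultimately show ?thesis using ij(3) unfolding R_def by auto
    next
      assume a: "\<not> i \<le> 2*l" "\<not> j \<le> 2*l"
      have "\<rho> (i - 2*l) = \<rho> (j - 2*l)" using cR(2)[of i] cR(2)[of j] a ij unfolding g_def by simp
      moreover have "i - 2*l \<in> {1..card R}" "j - 2*l \<in> {1..card R}"
        using a ij unfolding m_def by auto
      ultimately have "i - 2*l = j - 2*l" using rho unfolding bij_betw_def inj_on_def by blast
      then show ?thesis using a by auto
    qed
  qed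
  have gimg: "g ` {1..m} = V"
  proof
    show "g ` {1..m} \<subseteq> V" using c_in fV unfolding g_def by auto
    show "V \<subseteq> g ` {1..m}"
    proof
      fix v assume v: "v \<in> V"
      show "v \<in> g ` {1..m}"
      proof (cases "v \<in> f ` S")
        case True
        then obtain a where a: "a \<in> S" "v = f a" by blast
        then obtain i where i: "i \<in> {1..2*l}" "\<sigma> i = a" using sig_surj by blast
        have "g i = v" using i a unfolding g_def c_def by auto
        moreover have "i \<in> {1..m}" using i unfolding m_def by auto
        ultimately show ?thesis by blast
      next
        case False
        then have "v \<in> R" using v unfolding R_def by auto
        then obtain r where r: "r \<in> {1..card R}" "\<rho> r = v"
          using rho unfolding bij_betw_def by force
        define i where "i = r + 2*l"
        have im: "i \<in> {1..m}" "\<not> i \<le> 2*l" using r unfolding i_def m_def by auto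
        have "g i = v" using cR[OF im] r unfolding g_def i_def by auto
        then show ?thesis using im by blast
      qed
    qed
  qed
  have "graph_iso (N_verts m) (N_edge m l) V E g"
    unfolding graph_iso_def N_verts_def bij_betw_def using ginj gimg gE by auto
  then have "graph_isomorphic V E (N_verts m) (N_edge m l)" by (rule iso_flip)
  moreover have "2*l < m" using Rne unfolding m_def by auto
  ultimately show ?thesis by blast
qed

end
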